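(* The map $M\mapsto\mathfrak W_M$ is a bijection from the set of submonoids of $(\mathbb N_0,+)$ onto the set of bracket pattern categories.
   Context: $\mathbb N=\{1,2,\dots\}$, $\mathbb N_0=\mathbb N\cup\{0\}$. A bracket pattern is a non-empty finite subset $w\subseteq\mathbb N$; $\|w\|:=\max(w)$. For bracket patterns $w,w'$: superposition $w\cup w'$; for $j\in w$ the projection $\cap_j w:=\{i\in w\mid i\le j\}$; the dual $w^\dagger:=\{\|w\|-i\mid i\in\mathbb N_0,\ i<\|w\|,\ i\notin w\}$. A bracket pattern category is a (possibly empty) set of bracket patterns closed under superposition, duals and projections. The completion of a bracket pattern $w$ is $A(w):=\{j-i\mid j\in w,\ i\in\mathbb N_0,\ i\notin w,\ i<j\}$. For a submonoid $M$ of $(\mathbb N_0,+)$ (a subset containing $0$ and closed under addition), $\mathfrak W_M:=\{w\mid w\text{ bracket pattern},\ A(w)\subseteq\mathbb N_0\setminus M\}$. *)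

theory Defs
  imports Main
begin

definition bracket_pattern :: "nat set \<Rightarrow> bool" where
  "bracket_pattern w \<longleftrightarrow> finite w \<and> w \<noteq> {} \<and> 0 \<notin> w"

definition bp_norm :: "nat set \<Rightarrow> nat" where
  "bp_norm w = Max w"

definition bp_proj :: "nat \<Rightarrow> nat set \<Rightarrow> nat set" where
  "bp_proj j w = {i \<in> w. i \<le> j}"

definition bp_dual :: "nat set \<Rightarrow> nat set" where
  "bp_dual w = {bp_norm w - i | i. i < bp_norm w \<and> i \<notin> w}"

definition bp_category :: "nat set set \<Rightarrow> bool" where
  "bp_category C \<longleftrightarrow>
     (\<forall>w\<in>C. bracket_pattern w) \<and>
     (\<forall>w\<in>C. \<forall>w'\<in>C. w \<union> w' \<in> C) \<and>
     (\<forall>w\<in>C. bp_dual w \<in> C) \<and>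
     (\<forall>w\<in>C. \<forall>j\<in>w. bp_proj j w \<in> C)"

definition completion :: "nat set \<Rightarrow> nat set" where
  "completion w = {j - i | j i. j \<in> w \<and> i \<notin> w \<and> i < j}"

definition submonoid_N0 :: "nat set \<Rightarrow> bool" where
  "submonoid_N0 M \<longleftrightarrow> 0 \<in> M \<and> (\<forall>a\<in>M. \<forall>b\<in>M. a + b \<in> M)"

definition W_of :: "nat set \<Rightarrow> nat set set" where
  "W_of M = {w. bracket_pattern w \<and> completion w \<subseteq> - M}"

end

theory Submission
  imports Defs
begin

lemma bp_Max_iff: "bracket_pattern w \<Longrightarrow> Max w = n \<longleftrightarrow> n \<in> w \<and> (\<forall>x\<in>w. x \<le> n)"
  unfolding bracket_pattern_def by (simp add: Max_eq_iff)

lemma bp_le_Max: "bracket_pattern w \<Longrightarrow> x \<in> w \<Longrightarrow> x \<le> Max w"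
  unfolding bracket_pattern_def by simp

lemma bp_Max_in: "bracket_pattern w \<Longrightarrow> Max w \<in> w"
  unfolding bracket_pattern_def by simp

lemma bp_pos: "bracket_pattern w \<Longrightarrow> x \<in> w \<Longrightarrow> 0 < x"
  unfolding bracket_pattern_def by (cases x) auto

lemma dual_mem: "bracket_pattern w \<Longrightarrow>
   k \<in> bp_dual w \<longleftrightarrow> 0 < k \<and> k \<le> Max w \<and> Max w - k \<notin> w"
  unfolding bp_dual_def bp_norm_def
proof safe
  fix i assume "bracket_pattern w" "i < Max w" "i \<notin> w" "Max w - (Max w - i) \<in> w"
  then show False by simp
next
  assume "bracket_pattern w" "0 < k" "k \<le> Max w" "Max w - k \<notin> w"
  then show "\<exists>i. k = Max w - i \<and> i < Max w \<and> i \<notin> w"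
    by (intro exI[of _ "Max w - k"]) auto
qed auto

lemma compl_sub: "bracket_pattern w \<Longrightarrow> w \<subseteq> completion w"
  unfolding completion_def
proof
  fix x assume "bracket_pattern w" "x \<in> w"
  then show "x \<in> {j - i |j i. j \<in> w \<and> i \<notin> w \<and> i < j}"
    using bp_pos[of w x] by (intro CollectI exI[of _ x] exI[of _ 0]) (auto simp: bracket_pattern_def)
qed

lemma completion_pos: "x \<in> completion w \<Longrightarrow> 0 < x"
  unfolding completion_def by auto

lemma dual_bp: assumes "bracket_pattern w" shows "bracket_pattern (bp_dual w)"
proof -
  have "bp_dual w \<subseteq> {..Max w}" using dual_mem[OF assms] by auto
  moreover have "Max w \<in> bp_dual w" using dual_mem[OF assms] bp_pos[OF assms bp_Max_in[OF assms]] assms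
    by (auto simp: bracket_pattern_def)
  moreover have "0 \<notin> bp_dual w" using dual_mem[OF assms] by auto
  ultimately show ?thesis unfolding bracket_pattern_def
    by (auto intro: finite_subset)
qed

lemma dual_Max: assumes "bracket_pattern w" shows "Max (bp_dual w) = Max w"
proof -
  have "Max w \<in> bp_dual w" using dual_mem[OF assms] bp_pos[OF assms bp_Max_in[OF assms]] assms
    by (auto simp: bracket_pattern_def)
  then show ?thesis using bp_Max_iff[OF dual_bp[OF assms]] dual_mem[OF assms] by auto
qed

lemma dual_completion: assumes "bracket_pattern w"
  shows "completion (bp_dual w) \<subseteq> completion w"
proof
  fix x assume "x \<in> completion (bp_dual w)"
  then obtain j i where x: "x = j - i" "j \<in> bp_dual w" "i \<notin> bp_dual w" "i < j"
    unfolding completion_def by auto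
  define n where "n = Max w"
  have j: "0 < j" "j \<le> n" "n - j \<notin> w" using x dual_mem[OF assms] n_def by auto
  have "n - i \<in> w"
  proof (cases "i = 0")
    case True then show ?thesis using bp_Max_in[OF assms] n_def by simp
  next
    case False then show ?thesis using x dual_mem[OF assms] j n_def by auto
  qed
  moreover have "x = (n - i) - (n - j)" using x j by simp
  moreover have "n - j < n - i" using x j by simp
  ultimately show "x \<in> completion w" using j unfolding completion_def by blast
qed

lemma union_completion: "completion (w \<union> w') \<subseteq> completion w \<union> completion w'"
  unfolding completion_def by blast

lemma proj_bp: "bracket_pattern w \<Longrightarrow> j \<in> w \<Longrightarrow> bracket_pattern (bp_proj j w)"
  unfolding bracket_pattern_def bp_proj_def by auto

lemma proj_Max: "bracket_pattern w \<Longrightarrow> j \<in> w \<Longrightarrow> Max (bp_proj j w) = j"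
  using bp_Max_iff[OF proj_bp] unfolding bp_proj_def by auto

lemma proj_completion: "completion (bp_proj j w) \<subseteq> completion w"
  unfolding completion_def bp_proj_def by force

lemma W_cat: "bp_category (W_of M)"
  unfolding bp_category_def W_of_def
proof (intro conjI ballI; clarify?)
  fix w w' assume "bracket_pattern w" "completion w \<subseteq> - M" "bracket_pattern w'" "completion w' \<subseteq> - M"
  then show "bracket_pattern (w \<union> w') \<and> completion (w \<union> w') \<subseteq> - M"
    using union_completion[of w w'] unfolding bracket_pattern_def by auto
next
  fix w assume "bracket_pattern w" "completion w \<subseteq> - M"
  then show "bracket_pattern (bp_dual w) \<and> completion (bp_dual w) \<subseteq> - M"
    using dual_bp dual_completion by blast
next
  fix w j assume "bracket_pattern w" "completion w \<subseteq> - M" "j \<in> w"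
  then show "bracket_pattern (bp_proj j w) \<and> completion (bp_proj j w) \<subseteq> - M"
    using proj_bp proj_completion by blast
qed

lemma W_inj_aux: assumes "submonoid_N0 M"
  shows "x \<notin> M \<longleftrightarrow> (\<exists>w\<in>W_of M. x \<in> completion w)"
proof
  assume "\<exists>w\<in>W_of M. x \<in> completion w" then show "x \<notin> M" unfolding W_of_def by auto
next
  assume xM: "x \<notin> M"
  have M0: "0 \<in> M" and Madd: "\<And>a b. a \<in> M \<Longrightarrow> b \<in> M \<Longrightarrow> a + b \<in> M"
    using assms unfolding submonoid_N0_def by auto
  define w where "w = {k. 1 \<le> k \<and> k \<le> x \<and> k \<notin> M}"
  have wmem: "\<And>k. k \<in> w \<longleftrightarrow> 1 \<le> k \<and> k \<le> x \<and> k \<notin> M" unfolding w_def by simp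
  have x0: "0 < x" using xM M0 by (cases x) auto
  have xw: "x \<in> w" using wmem xM x0 by simp
  have "finite w" by (rule finite_subset[of _ "{..x}"]) (use wmem in auto)
  then have bp: "bracket_pattern w" unfolding bracket_pattern_def using xw wmem by auto
  have "completion w \<subseteq> - M"
  proof
    fix y assume "y \<in> completion w"
    then obtain j i where y: "y = j - i" "j \<in> w" "i \<notin> w" "i < j" unfolding completion_def by auto
    have j: "j \<le> x" "j \<notin> M" using y(2) wmem by auto
    have "i \<in> M"
    proof (cases "i = 0")
      case True then show ?thesis using M0 by simp
    next
      case False then show ?thesis using y(3,4) j wmem by simp
    qed
    moreover have "j = y + i" using y by simp
    ultimately show "y \<in> - M" using Madd[of y i] j by auto
  qed
  moreover have "x \<in> completion w" unfolding completion_def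
  proof (intro CollectI exI conjI)
    show "x = x - 0" by simp
  qed (use xw wmem x0 in auto)
  ultimately show "\<exists>w\<in>W_of M. x \<in> completion w" using bp unfolding W_of_def by auto
qed

lemma W_inj: "inj_on W_of {M. submonoid_N0 M}"
proof (rule inj_onI)
  fix M M' assume "M \<in> {M. submonoid_N0 M}" "M' \<in> {M. submonoid_N0 M}" "W_of M = W_of M'"
  then have "\<And>x. x \<notin> M \<longleftrightarrow> x \<notin> M'" using W_inj_aux[of M] W_inj_aux[of M'] by simp
  then show "M = M'" by blast
qed

lemma fin_union: assumes "bp_category C" "finite F" "F \<noteq> {}" "F \<subseteq> C" shows "\<Union>F \<in> C"
  using assms(2,3,4)
proof (induction F rule: finite_ne_induct)
  case (singleton x) then show ?case by simp
next
  case (insert x F) then show ?case using assms(1) unfolding bp_category_def by auto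
qed

lemma inter2: assumes C: "bp_category C" and a: "a \<in> C" and b: "b \<in> C"
  and ab: "Max a = n" "Max b = n"
  shows "a \<inter> b \<in> C" "Max (a \<inter> b) = n"
proof -
  have bpa: "bracket_pattern a" and bpb: "bracket_pattern b" using C a b unfolding bp_category_def by auto
  have X: "bp_dual a \<union> bp_dual b \<in> C" using C a b unfolding bp_category_def by auto
  then have bpX: "bracket_pattern (bp_dual a \<union> bp_dual b)" using C unfolding bp_category_def by auto
  have da: "\<And>k. k \<in> bp_dual a \<longleftrightarrow> 0 < k \<and> k \<le> n \<and> n - k \<notin> a"
    using dual_mem[OF bpa] ab(1) by simp
  have db: "\<And>k. k \<in> bp_dual b \<longleftrightarrow> 0 < k \<and> k \<le> n \<and> n - k \<notin> b"
    using dual_mem[OF bpb] ab(2) by simp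
  have na: "n \<in> a" "n \<in> b" using ab bp_Max_in[OF bpa] bp_Max_in[OF bpb] by auto
  have a0: "0 \<notin> a" using bpa unfolding bracket_pattern_def by simp
  have "n \<in> bp_dual a" using da a0 bp_pos[OF bpa na(1)] by simp
  moreover have "\<forall>x\<in>bp_dual a \<union> bp_dual b. x \<le> n" using da db by blast
  ultimately have MX: "Max (bp_dual a \<union> bp_dual b) = n" using bp_Max_iff[OF bpX] by blast
  have dX: "\<And>k. k \<in> bp_dual (bp_dual a \<union> bp_dual b) \<longleftrightarrow>
      0 < k \<and> k \<le> n \<and> n - k \<notin> bp_dual a \<and> n - k \<notin> bp_dual b"
    using dual_mem[OF bpX] MX by simp
  have "bp_dual (bp_dual a \<union> bp_dual b) = a \<inter> b"
  proof (intro set_eqI iffI)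
    fix k assume "k \<in> bp_dual (bp_dual a \<union> bp_dual b)"
    then have k: "0 < k" "k \<le> n" "n - k \<notin> bp_dual a" "n - k \<notin> bp_dual b" using dX by blast+
    show "k \<in> a \<inter> b"
    proof (cases "k = n")
      case True then show ?thesis using na by simp
    next
      case False
      then have "0 < n - k" "n - k \<le> n" "n - (n - k) = k" using k by auto
      then show ?thesis using k(3,4) da[of "n - k"] db[of "n - k"] by auto
    qed
  next
    fix k assume k: "k \<in> a \<inter> b"
    have k1: "0 < k" "k \<le> n" using k bp_pos[OF bpa, of k] bp_le_Max[OF bpa, of k] ab by auto
    then have "n - (n - k) = k" by simp
    then have "n - k \<notin> bp_dual a" "n - k \<notin> bp_dual b" using da[of "n - k"] db[of "n - k"] k by auto
    then show "k \<in> bp_dual (bp_dual a \<union> bp_dual b)" using dX k1 by blast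
  qed
  then show "a \<inter> b \<in> C" using X C unfolding bp_category_def by metis
  have fin: "finite (a \<inter> b)" using bpa unfolding bracket_pattern_def by simp
  have "\<forall>x\<in>a \<inter> b. x \<le> n" using bp_le_Max[OF bpa] ab by auto
  then show "Max (a \<inter> b) = n" using fin na by (intro Max_eqI) auto
qed

lemma fin_inter: assumes "bp_category C" "finite F" "F \<noteq> {}" "F \<subseteq> C" "\<forall>a\<in>F. Max a = n"
  shows "\<Inter>F \<in> C \<and> Max (\<Inter>F) = n"
  using assms(2,3,4,5)
proof (induction F rule: finite_ne_induct)
  case (singleton x) then show ?case by simp
next
  case (insert x F) then show ?case using inter2[OF assms(1), of x "\<Inter>F" n] by auto
qed

context
  fixes C :: "nat set set"
  assumes C: "bp_category C"
begin

lemma cbp: "w \<in> C \<Longrightarrow> bracket_pattern w"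
  using C unfolding bp_category_def by auto

lemma cU: "w \<in> C \<Longrightarrow> w' \<in> C \<Longrightarrow> w \<union> w' \<in> C"
  using C unfolding bp_category_def by auto

lemma cDual: "w \<in> C \<Longrightarrow> bp_dual w \<in> C"
  using C unfolding bp_category_def by auto

lemma cProj: "w \<in> C \<Longrightarrow> j \<in> w \<Longrightarrow> bp_proj j w \<in> C"
  using C unfolding bp_category_def by auto

lemma P1: assumes "k \<in> \<Union>(completion ` C)" shows "\<exists>p\<in>C. Max p = k"
proof -
  obtain u j i where u: "u \<in> C" "k = j - i" "j \<in> u" "i \<notin> u" "i < j"
    using assms unfolding completion_def by auto
  define c where "c = bp_proj j u"
  have c: "c \<in> C" "Max c = j" "bracket_pattern c" using u cProj proj_Max cbp c_def by auto
  have "i \<notin> c" using u c_def unfolding bp_proj_def by auto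
  then have "k \<in> bp_dual c" using dual_mem[OF c(3)] c u by auto
  moreover have "bp_dual c \<in> C" using cDual c by auto
  ultimately show ?thesis using cProj proj_Max cbp by blast
qed

lemma Dsub: "w \<in> C \<Longrightarrow> w \<subseteq> \<Union>(completion ` C)"
  using compl_sub cbp by blast

lemma P2: assumes "k \<in> \<Union>(completion ` C)"
  shows "{m. 1 \<le> m \<and> m \<le> k \<and> m \<in> \<Union>(completion ` C)} \<in> C"
    "Max {m. 1 \<le> m \<and> m \<le> k \<and> m \<in> \<Union>(completion ` C)} = k"
proof -
  define D where "D = \<Union>(completion ` C)"
  define W where "W = {m. 1 \<le> m \<and> m \<le> k \<and> m \<in> D}"
  obtain p where p: "\<And>m. m \<in> D \<Longrightarrow> p m \<in> C \<and> Max (p m) = m"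
    using P1 unfolding D_def by metis
  have k0: "0 < k" using assms completion_pos by auto
  have kW: "k \<in> W" using assms k0 unfolding W_def D_def by auto
  have fin: "finite W" unfolding W_def by (rule finite_subset[of _ "{..k}"]) auto
  have "\<Union>(p ` W) = W"
  proof (intro set_eqI iffI)
    fix x assume "x \<in> \<Union>(p ` W)"
    then obtain m where m: "m \<in> W" "x \<in> p m" by auto
    then have "p m \<in> C" "Max (p m) = m" using p unfolding W_def by auto
    then show "x \<in> W" using m bp_le_Max[of "p m" x] cbp bp_pos[of "p m" x] Dsub[of "p m"]
      unfolding W_def D_def by force
  next
    fix x assume "x \<in> W"
    then have "p x \<in> C" "Max (p x) = x" using p unfolding W_def by auto
    then have "x \<in> p x" using bp_Max_in[OF cbp[of "p x"]] by simp
    then show "x \<in> \<Union>(p ` W)" using \<open>x \<in> W\<close> by blast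
  qed
  moreover have "\<Union>(p ` W) \<in> C" using fin kW p unfolding W_def by (intro fin_union[OF C]) auto
  ultimately show "{m. 1 \<le> m \<and> m \<le> k \<and> m \<in> \<Union>(completion ` C)} \<in> C"
    unfolding W_def D_def by simp
  show "Max {m. 1 \<le> m \<and> m \<le> k \<and> m \<in> \<Union>(completion ` C)} = k"
    using fin kW unfolding W_def D_def by (intro Max_eqI) auto
qed

lemma Cmonoid: "submonoid_N0 (- \<Union>(completion ` C))"
  unfolding submonoid_N0_def
proof (intro conjI ballI)
  show "0 \<in> - \<Union>(completion ` C)" using completion_pos by blast
next
  fix a b assume a: "a \<in> - \<Union>(completion ` C)" and b: "b \<in> - \<Union>(completion ` C)"
  show "a + b \<in> - \<Union>(completion ` C)"
  proof
    assume ab: "a + b \<in> \<Union>(completion ` C)"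
    define W where "W = {m. 1 \<le> m \<and> m \<le> a + b \<and> m \<in> \<Union>(completion ` C)}"
    have WC: "W \<in> C" using P2[OF ab] W_def by simp
    have "b \<noteq> 0" using a ab by (cases b) auto
    have "0 < a + b" using ab completion_pos by blast
    then have "a + b \<in> W" using ab unfolding W_def by auto
    moreover have "a \<notin> W" using a unfolding W_def by auto
    moreover have "a < a + b" using \<open>b \<noteq> 0\<close> by simp
    ultimately have "(a + b) - a \<in> completion W" unfolding completion_def by blast
    then show False using WC b by auto
  qed
qed

lemma Csurj: assumes v: "bracket_pattern v" and cv: "completion v \<subseteq> \<Union>(completion ` C)"
  shows "v \<in> C"
proof -
  define D where "D = \<Union>(completion ` C)"
  define Wf where "Wf = (\<lambda>k. {m. 1 \<le> m \<and> m \<le> k \<and> m \<in> D})"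
  have Wf_mem: "\<And>x k. x \<in> Wf k \<longleftrightarrow> 1 \<le> x \<and> x \<le> k \<and> x \<in> D" unfolding Wf_def by simp
  have WfC: "\<And>k. k \<in> D \<Longrightarrow> Wf k \<in> C \<and> Max (Wf k) = k" using P2 unfolding Wf_def D_def by auto
  define n where "n = Max v"
  have nv: "n \<in> v" using bp_Max_in[OF v] n_def by simp
  have vD: "v \<subseteq> D" using compl_sub[OF v] cv D_def by auto
  have nD: "n \<in> D" using nv vD by auto
  have Wn: "Wf n \<in> C" "Max (Wf n) = n" using WfC nD by auto
  have bWn: "bracket_pattern (Wf n)" using cbp Wn by auto
  have vle: "\<And>x. x \<in> v \<Longrightarrow> 0 < x \<and> x \<le> n" using bp_pos[OF v] bp_le_Max[OF v] n_def by auto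
  define z where "z = (\<lambda>i. bp_dual (bp_dual (Wf n) \<union> bp_dual (Wf (n - i))))"
  have zprop: "z i \<in> C \<and> Max (z i) = n \<and> i \<notin> z i \<and> v \<subseteq> z i" if i: "i \<in> {1..<n} - v" for i
  proof -
    have i1: "1 \<le> i" "i < n" "i \<notin> v" using i by auto
    define m where "m = n - i"
    have mpos: "0 < m" "m \<le> n" using i1 m_def by auto
    have "m \<in> completion v" using i1 nv unfolding m_def completion_def by blast
    then have mD: "m \<in> D" using cv D_def by auto
    have Wm: "Wf m \<in> C" "Max (Wf m) = m" using WfC mD by auto
    have bWm: "bracket_pattern (Wf m)" using cbp Wm by auto
    define X where "X = bp_dual (Wf n) \<union> bp_dual (Wf m)"
    have XC: "X \<in> C" using X_def cU cDual Wn Wm by auto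
    have bX: "bracket_pattern X" using cbp XC by auto
    have "0 \<notin> Wf n" using Wf_mem by simp
    then have "n \<in> bp_dual (Wf n)" using dual_mem[OF bWn] Wn vle[OF nv] by simp
    moreover have "\<forall>x\<in>X. x \<le> n"
    proof
      fix x assume "x \<in> X"
      then show "x \<le> n" unfolding X_def using dual_mem[OF bWn, of x] dual_mem[OF bWm, of x] Wn(2) Wm(2) mpos
        by auto
    qed
    ultimately have MX: "Max X = n" using bp_Max_iff[OF bX] X_def by auto
    have zi: "z i = bp_dual X" unfolding z_def X_def m_def by simp
    have zmem: "\<And>k. k \<in> z i \<longleftrightarrow> 0 < k \<and> k \<le> n \<and> n - k \<notin> X" using dual_mem[OF bX] zi MX by simp
    have "z i \<in> C" using zi cDual XC by simp
    moreover have "Max (z i) = n" using zi dual_Max[OF bX] MX by simp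
    moreover have "0 \<notin> Wf m" using Wf_mem by simp
    then have "m \<in> bp_dual (Wf m)" using dual_mem[OF bWm] Wm mpos by simp
    then have "n - i \<in> X" using X_def m_def by simp
    then have "i \<notin> z i" using zmem by simp
    moreover have "v \<subseteq> z i"
    proof
      fix k assume k: "k \<in> v"
      have k1: "0 < k" "k \<le> n" using vle[OF k] by auto
      have "k \<in> Wf n" using Wf_mem k1 vD k by auto
      then have "n - k \<notin> bp_dual (Wf n)" using dual_mem[OF bWn, of "n - k"] Wn(2) k1 by simp
      moreover have "n - k \<notin> bp_dual (Wf m)"
      proof
        assume a: "n - k \<in> bp_dual (Wf m)"
        then have t: "n - k \<le> m" "m - (n - k) \<notin> Wf m" using dual_mem[OF bWm, of "n - k"] Wm(2) by auto
        have "i \<noteq> k" using k i1 by auto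
        then have ik: "i < k" using t(1) k1 i1 unfolding m_def by linarith
        then have "k - i \<in> completion v" using k i1 unfolding completion_def by blast
        then have "k - i \<in> D" using cv D_def by auto
        moreover have eq: "m - (n - k) = k - i" using ik k1 i1 unfolding m_def by linarith
        moreover have "k - i \<le> m" using ik k1 i1 unfolding m_def by linarith
        ultimately have "m - (n - k) \<in> Wf m" using Wf_mem ik by simp
        then show False using t(2) by simp
      qed
      ultimately show "k \<in> z i" using zmem k1 X_def by simp
    qed
    ultimately show ?thesis by blast
  qed
  define F where "F = insert (Wf n) (z ` ({1..<n} - v))"
  have FC: "F \<subseteq> C" using zprop Wn unfolding F_def by blast
  have FM: "\<forall>a\<in>F. Max a = n" using zprop Wn unfolding F_def by blast
  have "\<Inter>F \<in> C" using fin_inter[OF C _ _ FC FM] unfolding F_def by simp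
  moreover have "\<Inter>F = v"
  proof (intro set_eqI iffI)
    fix x assume x: "x \<in> \<Inter>F"
    then have "x \<in> Wf n" unfolding F_def by blast
    then have x1: "1 \<le> x" "x \<le> n" using Wf_mem by auto
    show "x \<in> v"
    proof (rule ccontr)
      assume "x \<notin> v"
      then have xi: "x \<in> {1..<n} - v" using x1 nv by (cases "x = n") auto
      then have "z x \<in> F" unfolding F_def by blast
      then have "x \<in> z x" using x by blast
      then show False using zprop[OF xi] by blast
    qed
  next
    fix x assume xv: "x \<in> v"
    have "x \<in> Wf n" using Wf_mem vle[OF xv] vD xv by auto
    moreover have "\<forall>i\<in>{1..<n} - v. x \<in> z i" using zprop xv by blast
    ultimately show "x \<in> \<Inter>F" unfolding F_def by blast
  qed
  ultimately show ?thesis by simp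
qed

lemma Cimage: "C = W_of (- \<Union>(completion ` C))"
proof (intro set_eqI iffI)
  fix w assume "w \<in> C"
  then show "w \<in> W_of (- \<Union>(completion ` C))" unfolding W_of_def using cbp by blast
next
  fix w assume "w \<in> W_of (- \<Union>(completion ` C))"
  then have "bracket_pattern w" "completion w \<subseteq> \<Union>(completion ` C)" unfolding W_of_def by auto
  then show "w \<in> C" by (rule Csurj)
qed

end

theorem proposition7p17:
  shows "bij_betw W_of {M. submonoid_N0 M} {C. bp_category C}"
  unfolding bij_betw_def
proof (intro conjI W_inj set_eqI iffI)
  fix C assume "C \<in> W_of ` {M. submonoid_N0 M}"
  then show "C \<in> {C. bp_category C}" using W_cat by blast
next
  fix C assume "C \<in> {C. bp_category C}"
  then have "bp_category C" by simp
  then have "C = W_of (- \<Union>(completion ` C))" "- \<Union>(completion ` C) \<in> {M. submonoid_N0 M}"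
    using Cimage[of C] Cmonoid[of C] by auto
  then show "C \<in> W_of ` {M. submonoid_N0 M}" by (metis image_eqI)
qed

end
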